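(* (a) There are absolute constants $C,C'>0$ such that for every $n\ge 2$ and every directed graph $G_0$ on $n$ nodes, the directed two-hop walk process started from $G_0$ has terminated by round $\lceil Cn^2\log n\rceil$ with probability at least $1-C'/n$. (b) There is an absolute constant $c>0$ and, for infinitely many $n$, a weakly connected directed graph $G_0$ on $n$ nodes such that the probability that the directed two-hop walk process started from $G_0$ has terminated by round $\lfloor c\,n^2\ln n\rfloor$ tends to $0$ as $n\to\infty$.
   Context: Directed two-hop walk process: $G_0$ is a simple directed graph (no loops, no parallel arcs) on an $n$-node vertex set $V$. Given $G_t$, in round $t$ every node $x$ with at least one out-neighbor independently picks an out-neighbor $v$ of $x$ in $G_t$ uniformly at random and then, if $v$ has an out-neighbor, an out-neighbor $w$ of $v$ in $G_t$ uniformly at random, and the arc $(x,w)$ is added (nothing happens if $w=x$ or the arc already exists); $G_{t+1}$ is $G_t$ together with all arcs added in round $t$. Arcs are never removed. The process has terminated at time $t$ if for all nodes $u\neq v$ such that $G_0$ contains a directed path from $u$ to $v$, the arc $(u,v)$ belongs to $G_t$. *)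

theory Defs
  imports "HOL-Probability.Probability"
begin

definition digraph_on :: "nat \<Rightarrow> (nat \<times> nat) set \<Rightarrow> bool" where
  "digraph_on n G \<longleftrightarrow> G \<subseteq> {..<n} \<times> {..<n} \<and> (\<forall>x. (x, x) \<notin> G)"

definition weakly_connected_on :: "nat \<Rightarrow> (nat \<times> nat) set \<Rightarrow> bool" where
  "weakly_connected_on n G \<longleftrightarrow> (\<forall>u<n. \<forall>v<n. (u, v) \<in> (G \<union> G\<inverse>)\<^sup>*)"

definition out_nbrs :: "(nat \<times> nat) set \<Rightarrow> nat \<Rightarrow> nat set" where
  "out_nbrs G x = {y. (x, y) \<in> G}"

definition node_step :: "(nat \<times> nat) set \<Rightarrow> nat \<Rightarrow> (nat \<times> nat) option pmf" where
  "node_step G x =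
     (if out_nbrs G x = {} then return_pmf None
      else do {
        v \<leftarrow> pmf_of_set (out_nbrs G x);
        (if out_nbrs G v = {} then return_pmf None
         else do {
           w \<leftarrow> pmf_of_set (out_nbrs G v);
           return_pmf (if w = x then None else Some (x, w))
         })
      })"

definition round_step :: "nat \<Rightarrow> (nat \<times> nat) set \<Rightarrow> (nat \<times> nat) set pmf" where
  "round_step n G =
     map_pmf (\<lambda>f. G \<union> {a. \<exists>x<n. f x = Some a}) (Pi_pmf {..<n} None (node_step G))"

primrec two_hop :: "nat \<Rightarrow> (nat \<times> nat) set \<Rightarrow> nat \<Rightarrow> (nat \<times> nat) set pmf" where
  "two_hop n G0 0 = return_pmf G0"
| "two_hop n G0 (Suc t) = two_hop n G0 t \<bind> round_step n"

definition terminated :: "(nat \<times> nat) set \<Rightarrow> (nat \<times> nat) set \<Rightarrow> bool" where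
  "terminated G0 G \<longleftrightarrow> (\<forall>u v. u \<noteq> v \<and> (u, v) \<in> G0\<^sup>+ \<longrightarrow> (u, v) \<in> G)"

definition term_prob :: "nat \<Rightarrow> (nat \<times> nat) set \<Rightarrow> nat \<Rightarrow> real" where
  "term_prob n G0 t = measure_pmf.prob (two_hop n G0 t) {G. terminated G0 G}"

end

theory Submission
  imports Defs
begin

lemma finite_out: "finite G \<Longrightarrow> finite (out_nbrs G x)"
proof -
  assume "finite G"
  have "out_nbrs G x = snd ` (G \<inter> {p. fst p = x})" by (force simp: out_nbrs_def image_iff)
  thus ?thesis using \<open>finite G\<close> by simp
qed

lemma node_step_pmf:
  assumes fin: "finite G" and xw: "x \<noteq> w"
  shows "pmf (node_step G x) (Some (x, w)) =
    (if out_nbrs G x = {} then 0 else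
      (\<Sum>v\<in>out_nbrs G x. if w \<in> out_nbrs G v then 1 / real (card (out_nbrs G v)) else 0)
        / real (card (out_nbrs G x)))"
proof (cases "out_nbrs G x = {}")
  case True thus ?thesis by (simp add: node_step_def)
next
  case False
  have inner: "pmf (if out_nbrs G v = {} then return_pmf None
         else pmf_of_set (out_nbrs G v) \<bind> (\<lambda>w'. return_pmf (if w' = x then None else Some (x, w'))))
         (Some (x, w)) = (if w \<in> out_nbrs G v then 1 / real (card (out_nbrs G v)) else 0)" for v
  proof (cases "out_nbrs G v = {}")
    case True thus ?thesis by simp
  next
    case F2: False
    have "pmf (pmf_of_set (out_nbrs G v) \<bind> (\<lambda>w'. return_pmf (if w' = x then None else Some (x, w'))))
         (Some (x, w)) = (\<Sum>w'\<in>out_nbrs G v. indicator {w} w') / real (card (out_nbrs G v))"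
      using F2 finite_out[OF fin] xw
      apply (simp add: pmf_bind integral_pmf_of_set indicator_def)
      by (auto intro!: arg_cong[where f=card])
    also have "\<dots> = (if w \<in> out_nbrs G v then 1 / real (card (out_nbrs G v)) else 0)"
      using finite_out[OF fin] by (simp add: indicator_def sum.delta)
    finally show ?thesis using F2 by simp
  qed
  show ?thesis using False finite_out[OF fin]
    by (simp add: node_step_def pmf_bind integral_pmf_of_set inner)
qed

lemma node_step_set:
  assumes fin: "finite G" and a: "Some a \<in> set_pmf (node_step G x)"
  shows "\<exists>v w. a = (x, w) \<and> (x, v) \<in> G \<and> (v, w) \<in> G \<and> w \<noteq> x"
  using a finite_out[OF fin]
  apply (auto simp: node_step_def out_nbrs_def split: if_splits)
  apply (subst (asm) set_pmf_of_set; force)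
  done

lemma round_set:
  assumes fin: "finite G" and G': "G' \<in> set_pmf (round_step n G)"
  shows "\<exists>\<sigma>. G' = G \<union> {a. \<exists>x<n. \<sigma> x = Some a} \<and> (\<forall>x<n. \<sigma> x \<in> set_pmf (node_step G x))"
  using G' by (auto simp: round_step_def set_Pi_pmf PiE_dflt_def)

lemma round_sub:
  assumes fin: "finite G" and G': "G' \<in> set_pmf (round_step n G)"
  shows "G \<subseteq> G' \<and> G' \<subseteq> G\<^sup>+"
proof -
  obtain \<sigma> where s: "G' = G \<union> {a. \<exists>x<n. \<sigma> x = Some a}" "\<forall>x<n. \<sigma> x \<in> set_pmf (node_step G x)"
    using round_set[OF fin G'] by blast
  have "a \<in> G\<^sup>+" if "x < n" "\<sigma> x = Some a" for x a
    using node_step_set[OF fin, of a x] s(2) that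
    by (metis trancl.trancl_into_trancl r_into_trancl')
  thus ?thesis using s(1) by auto
qed

lemma two_hop_inv:
  assumes fin: "finite G0" and G: "G \<in> set_pmf (two_hop n G0 t)"
  shows "G0 \<subseteq> G \<and> G \<subseteq> G0\<^sup>+"
  using G
proof (induction t arbitrary: G)
  case 0 thus ?case by auto
next
  case (Suc t)
  then obtain H where H: "H \<in> set_pmf (two_hop n G0 t)" "G \<in> set_pmf (round_step n H)" by auto
  have IH: "G0 \<subseteq> H" "H \<subseteq> G0\<^sup>+" using Suc.IH[OF H(1)] by auto
  have "finite H" using IH(2) fin finite_trancl rev_finite_subset by blast
  from round_sub[OF this H(2)] have "H \<subseteq> G" "G \<subseteq> H\<^sup>+" by auto
  moreover have "H\<^sup>+ \<subseteq> G0\<^sup>+" using IH(2) by (metis subsetI trancl_mono trans_trancl trancl_id)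
  ultimately show ?case using IH by blast
qed

lemma two_hop_iter:
  assumes fin: "finite G0"
    and step: "\<And>G. G0 \<subseteq> G \<Longrightarrow> G \<subseteq> G0\<^sup>+ \<Longrightarrow> (\<integral>\<^sup>+G'. \<Phi> G' \<partial>round_step n G) \<le> r * \<Phi> G"
  shows "(\<integral>\<^sup>+G. \<Phi> G \<partial>two_hop n G0 t) \<le> r ^ t * \<Phi> G0"
proof (induction t)
  case 0 thus ?case by simp
next
  case (Suc t)
  have "(\<integral>\<^sup>+G. \<Phi> G \<partial>two_hop n G0 (Suc t)) = (\<integral>\<^sup>+G. (\<integral>\<^sup>+G'. \<Phi> G' \<partial>round_step n G) \<partial>two_hop n G0 t)"
    by simp
  also have "\<dots> \<le> (\<integral>\<^sup>+G. r * \<Phi> G \<partial>two_hop n G0 t)"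
    using two_hop_inv[OF fin] step by (intro nn_integral_mono_AE) (auto simp: AE_measure_pmf_iff)
  also have "\<dots> = r * (\<integral>\<^sup>+G. \<Phi> G \<partial>two_hop n G0 t)"
    by (simp add: nn_integral_cmult)
  also have "\<dots> \<le> r * (r ^ t * \<Phi> G0)" by (intro mult_left_mono Suc.IH) auto
  finally show ?case by (simp add: mult.assoc)
qed

lemma path_relpow:
  assumes "\<forall>i<d. (f i, f (Suc i)) \<in> R"
  shows "(f 0, f d) \<in> R ^^ d"
  unfolding relpow_fun_conv using assms by blast

lemma shortcut:
  assumes "\<forall>i<d. (f i, f (Suc i)) \<in> R"
    and "\<forall>i. i + 2 \<le> d \<longrightarrow> P i \<longrightarrow> (f i, f (i + 2)) \<in> R"
  shows "(f 0, f d) \<in> R ^^ (d - card {i. even i \<and> i + 2 \<le> d \<and> P i})"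
  using assms
proof (induction d arbitrary: f P rule: less_induct)
  case (less d)
  show ?case
  proof (cases "d < 2")
    case True
    hence e: "{i. even i \<and> i + 2 \<le> d \<and> P i} = {}" by auto
    show ?thesis unfolding e using path_relpow[OF less.prems(1)] by simp
  next
    case False
    define f' where "f' = (\<lambda>i. f (i + 2))"
    define P' where "P' = (\<lambda>i. P (i + 2))"
    define S' where "S' = {i. even i \<and> i + 2 \<le> d - 2 \<and> P' i}"
    have IH: "(f' 0, f' (d - 2)) \<in> R ^^ (d - 2 - card S')"
      unfolding S'_def
      apply (rule less.IH[of "d - 2" f' P'])
      using False less.prems by (simp_all add: f'_def P'_def)
    have d2: "d - 2 + 2 = d" using False by arith
    have fd: "f' (d - 2) = f d" "f' 0 = f 2" unfolding f'_def d2 by (simp_all add: numeral_2_eq_2)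
    have S'sub: "S' \<subseteq> {..<d-2}" by (auto simp: S'_def)
    hence cS': "card S' \<le> d - 2" using card_mono[OF finite_lessThan S'sub] by simp
    have fin: "finite S'" using S'sub finite_subset by blast
    have Seq: "{i. even i \<and> i + 2 \<le> d \<and> P i} = (if P 0 then {0} else {}) \<union> (\<lambda>i. i + 2) ` S'"
    proof (intro set_eqI iffI)
      fix i assume i: "i \<in> {i. even i \<and> i + 2 \<le> d \<and> P i}"
      show "i \<in> (if P 0 then {0} else {}) \<union> (\<lambda>i. i + 2) ` S'"
      proof (cases "i = 0")
        case True thus ?thesis using i by auto
      next
        case F: False
        have "i \<noteq> 1" using i by auto
        hence "i \<ge> 2" using F by linarith
        have e2: "Suc (Suc (i - 2)) = i" using \<open>i \<ge> 2\<close> by arith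
        hence "i - 2 \<in> S'" using i \<open>i \<ge> 2\<close> by (auto simp: S'_def P'_def)
        moreover have "i = i - 2 + 2" using \<open>i \<ge> 2\<close> by simp
        ultimately show ?thesis by blast
      qed
    next
      fix i assume "i \<in> (if P 0 then {0} else {}) \<union> (\<lambda>i. i + 2) ` S'"
      thus "i \<in> {i. even i \<and> i + 2 \<le> d \<and> P i}" using False
        by (auto simp: S'_def P'_def split: if_splits)
    qed
    have cS: "card {i. even i \<and> i + 2 \<le> d \<and> P i} = (if P 0 then 1 else 0) + card S'"
    proof -
      have ci: "card ((\<lambda>i. i + 2) ` S') = card S'" by (simp add: card_image inj_on_def)
      have n0: "0 \<notin> (\<lambda>i. i + 2) ` S'" by auto
      show ?thesis unfolding Seq using fin ci n0 by (simp del: add_2_eq_Suc')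
    qed
    show ?thesis
    proof (cases "P 0")
      case True
      have "(f 0, f 2) \<in> R" using less.prems(2) True False by (auto simp: numeral_2_eq_2)
      hence A: "(f 0, f d) \<in> R ^^ Suc (d - 2 - card S')" using relpow_Suc_I2[OF _ IH[unfolded fd]] by blast
      moreover have eq: "Suc (d - 2 - card S') = d - card {i. even i \<and> i + 2 \<le> d \<and> P i}"
        using cS cS' True False by simp
      show ?thesis using A[unfolded eq] .
    next
      case F0: False
      have "(f 0, f 1) \<in> R" "(f 1, f 2) \<in> R" using less.prems(1) False by (auto simp: numeral_2_eq_2)
      have "(f 1, f d) \<in> R ^^ Suc (d - 2 - card S')" using relpow_Suc_I2[OF \<open>(f 1, f 2) \<in> R\<close> IH[unfolded fd]] .
      hence A: "(f 0, f d) \<in> R ^^ Suc (Suc (d - 2 - card S'))" using relpow_Suc_I2[OF \<open>(f 0, f 1) \<in> R\<close>] by blast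
      moreover have eq: "Suc (Suc (d - 2 - card S')) = d - card {i. even i \<and> i + 2 \<le> d \<and> P i}"
        using cS cS' F0 False by simp
      show ?thesis using A[unfolded eq] .
    qed
  qed
qed

lemma marginal:
  fixes x n :: nat
  assumes "x < n"
  shows "emeasure (measure_pmf (Pi_pmf {..<n} dflt F)) {\<sigma>. \<sigma> x = a} = ennreal (pmf (F x) a)"
proof -
  have v: "{\<sigma>. \<sigma> x = a} = (\<lambda>\<sigma>. \<sigma> x) -` {a}" by auto
  have m: "map_pmf (\<lambda>\<sigma>. \<sigma> x) (Pi_pmf {..<n} dflt F) = F x"
  proof -
    have "map_pmf (\<lambda>\<sigma>. \<sigma> x) (Pi_pmf {..<n} dflt F) = (if x \<in> {..<n} then F x else return_pmf dflt)"
      by (rule Pi_pmf_component) simp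
    thus ?thesis using assms by simp
  qed
  have "emeasure (measure_pmf (F x)) {a} = emeasure (measure_pmf (Pi_pmf {..<n} dflt F)) ((\<lambda>\<sigma>. \<sigma> x) -` {a})"
    by (subst m[symmetric]) (rule emeasure_map_pmf)
  thus ?thesis unfolding v by (simp add: emeasure_pmf_single)
qed

lemma card_out_le:
  assumes "G \<subseteq> {..<n} \<times> {..<n}"
  shows "card (out_nbrs G x) \<le> n"
proof -
  have "out_nbrs G x \<subseteq> {..<n}" using assms by (auto simp: out_nbrs_def)
  thus ?thesis using card_mono[OF finite_lessThan] by fastforce
qed

lemma node_step_lb:
  assumes fin: "finite G" and sq: "G \<subseteq> {..<n} \<times> {..<n}"
    and xv: "(x, v) \<in> G" and vy: "(v, y) \<in> G" and xy: "x \<noteq> y"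
  shows "pmf (node_step G x) (Some (x, y)) \<ge> 1 / (real n ^ 2)"
proof -
  have vN: "v \<in> out_nbrs G x" and yN: "y \<in> out_nbrs G v" using xv vy by (auto simp: out_nbrs_def)
  have ne: "out_nbrs G x \<noteq> {}" using vN by auto
  have f1: "finite (out_nbrs G x)" "finite (out_nbrs G v)" using finite_out[OF fin] by auto
  have c1: "card (out_nbrs G x) \<ge> 1" "card (out_nbrs G v) \<ge> 1"
    using f1 vN yN by (auto simp: Suc_le_eq card_gt_0_iff)
  have c2: "card (out_nbrs G x) \<le> n" "card (out_nbrs G v) \<le> n" using card_out_le[OF sq] by auto
  have "1 / real (card (out_nbrs G v)) \<le>
      (\<Sum>v'\<in>out_nbrs G x. if y \<in> out_nbrs G v' then 1 / real (card (out_nbrs G v')) else 0)"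
    using member_le_sum[OF vN, of "\<lambda>v'. if y \<in> out_nbrs G v' then 1 / real (card (out_nbrs G v')) else 0"] f1 yN
    by simp
  hence "(1 / real (card (out_nbrs G v))) / real (card (out_nbrs G x)) \<le>
     (\<Sum>v'\<in>out_nbrs G x. if y \<in> out_nbrs G v' then 1 / real (card (out_nbrs G v')) else 0) / real (card (out_nbrs G x))"
    by (rule divide_right_mono) simp
  also have "\<dots> = pmf (node_step G x) (Some (x, y))"
    using node_step_pmf[OF fin xy] ne by simp
  finally have "(1 / real (card (out_nbrs G v))) / real (card (out_nbrs G x)) \<le> pmf (node_step G x) (Some (x, y))" .
  moreover have "1 / (real n ^ 2) \<le> (1 / real (card (out_nbrs G v))) / real (card (out_nbrs G x))"
  proof -
    have "real (card (out_nbrs G v)) * real (card (out_nbrs G x)) \<le> real n * real n"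
      using c2 by (intro mult_mono) auto
    moreover have "real (card (out_nbrs G v)) * real (card (out_nbrs G x)) > 0" using c1 by auto
    ultimately show ?thesis by (simp add: power2_eq_square frac_le divide_divide_eq_left)
  qed
  ultimately show ?thesis by linarith
qed

lemma card_evens: "card {i::nat. even i \<and> i + 2 \<le> d} = d div 2"
proof -
  have "{i::nat. even i \<and> i + 2 \<le> d} = (\<lambda>j. 2 * j) ` {..< d div 2}"
  proof (intro set_eqI iffI)
    fix i assume "i \<in> {i::nat. even i \<and> i + 2 \<le> d}"
    then obtain j where "i = 2 * j" "2 * j + 2 \<le> d" by (auto elim!: evenE)
    hence "j < d div 2" by linarith
    thus "i \<in> (\<lambda>j. 2 * j) ` {..< d div 2}" using \<open>i = 2 * j\<close> by auto
  next
    fix i assume "i \<in> (\<lambda>j. 2 * j) ` {..< d div 2}"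
    then obtain j where "i = 2 * j" "j < d div 2" by auto
    thus "i \<in> {i::nat. even i \<and> i + 2 \<le> d}" by auto
  qed
  thus ?thesis by (simp add: card_image inj_on_def)
qed

lemma shortest_distinct:
  assumes path: "\<forall>i<d. (f i, f (Suc i)) \<in> R"
    and least: "\<And>k. (f 0, f d) \<in> R ^^ k \<Longrightarrow> d \<le> k"
    and i: "i + 2 \<le> d"
  shows "f i \<noteq> f (i + 2)"
proof
  assume eq: "f i = f (i + 2)"
  define g where "g = (\<lambda>j. if j \<le> i then f j else f (j + 2))"
  have "\<forall>j<d-2. (g j, g (Suc j)) \<in> R"
  proof (intro allI impI)
    fix j assume j: "j < d - 2"
    show "(g j, g (Suc j)) \<in> R"
    proof (cases "j < i")
      case True thus ?thesis using path i by (auto simp: g_def)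
    next
      case False
      show ?thesis
      proof (cases "j = i")
        case True
        have "(f (i + 2), f (Suc (i + 2))) \<in> R" using path j True by auto
        thus ?thesis using True eq by (simp add: g_def)
      next
        case F2: False
        have "(f (j + 2), f (Suc (j + 2))) \<in> R" using path j by auto
        thus ?thesis using F2 False by (simp add: g_def)
      qed
    qed
  qed
  hence "(g 0, g (d - 2)) \<in> R ^^ (d - 2)" by (rule path_relpow)
  moreover have "g 0 = f 0" by (simp add: g_def)
  moreover have dd: "Suc (Suc (d - 2)) = d" using i by arith
  moreover have "g (d - 2) = f d"
  proof (cases "d - 2 \<le> i")
    case True hence "i = d - 2" using i by linarith
    thus ?thesis using eq dd by (simp add: g_def)
  next
    case False thus ?thesis using i dd by (simp add: g_def)
  qed
  ultimately have "d \<le> d - 2" using least by metis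
  thus False using i by linarith
qed

definition dist :: "(nat \<times> nat) set \<Rightarrow> nat \<Rightarrow> nat \<Rightarrow> nat" where
  "dist G u w = (LEAST k. (u, w) \<in> G ^^ k)"

lemma dist_le: "(u, w) \<in> G ^^ k \<Longrightarrow> dist G u w \<le> k"
  unfolding dist_def by (rule Least_le)

lemma dist_in: "(u, w) \<in> G\<^sup>+ \<Longrightarrow> (u, w) \<in> G ^^ dist G u w"
  unfolding dist_def by (rule LeastI_ex) (use trancl_power in blast)

lemma sq_trancl: "digraph_on n G0 \<Longrightarrow> G0\<^sup>+ \<subseteq> {..<n} \<times> {..<n}"
  unfolding digraph_on_def by (simp add: trancl_subset_Sigma)

lemma fin_G0: "digraph_on n G0 \<Longrightarrow> finite G0"
  unfolding digraph_on_def by (meson finite_SigmaI finite_lessThan finite_subset)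

lemma step_a:
  assumes dg: "digraph_on n G0" and G: "G0 \<subseteq> G" "G \<subseteq> G0\<^sup>+"
    and uw: "u \<noteq> w" "(u, w) \<in> G0\<^sup>+"
  shows "(\<integral>\<^sup>+G'. ennreal (real (dist G' u w - 1)) \<partial>round_step n G)
     \<le> ennreal (1 - 1 / (2 * real n ^ 2)) * ennreal (real (dist G u w - 1))"
proof -
  have sq: "G \<subseteq> {..<n} \<times> {..<n}" using G(2) sq_trancl[OF dg] by blast
  have fin: "finite G" using sq by (meson finite_SigmaI finite_lessThan finite_subset)
  have uwG: "(u, w) \<in> G\<^sup>+" using uw(2) G(1) trancl_mono by blast
  define d where "d = dist G u w"
  have dG: "(u, w) \<in> G ^^ d" unfolding d_def by (rule dist_in[OF uwG])
  have d0: "d > 0" using dG uw(1) by (cases d) auto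
  obtain f where f: "f 0 = u" "f d = w" "\<forall>i<d. (f i, f (Suc i)) \<in> G"
    using dG unfolding relpow_fun_conv by blast
  have least: "d \<le> k" if "(f 0, f d) \<in> G ^^ k" for k
  proof -
    have "(u, w) \<in> G ^^ k" using that f by simp
    thus ?thesis unfolding d_def by (rule dist_le)
  qed
  have fn: "f i < n" if "i < d" for i using f(3) that sq by blast
  define P where "P = Pi_pmf {..<n} None (node_step G)"
  define Gs where "Gs = (\<lambda>\<sigma>. G \<union> {a. \<exists>x<n. \<sigma> x = Some a})"
  define I where "I = {i. even i \<and> i + 2 \<le> d}"
  define S where "S = (\<lambda>\<sigma>::nat \<Rightarrow> (nat \<times> nat) option. {i. even i \<and> i + 2 \<le> d \<and> \<sigma> (f i) = Some (f i, f (i + 2))})"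
  have finI: "finite I" unfolding I_def by (rule finite_subset[of _ "{..d}"]) auto
  have SI: "S \<sigma> \<subseteq> I" for \<sigma> unfolding S_def I_def by auto
  have cardI: "card I = d div 2" unfolding I_def by (rule card_evens)
  have key: "dist (Gs \<sigma>) u w - 1 + card (S \<sigma>) \<le> d - 1" for \<sigma>
  proof -
    have "(f 0, f d) \<in> Gs \<sigma> ^^ (d - card (S \<sigma>))"
      unfolding S_def
    proof (rule shortcut)
      show "\<forall>i<d. (f i, f (Suc i)) \<in> Gs \<sigma>" using f(3) by (auto simp: Gs_def)
      show "\<forall>i. i + 2 \<le> d \<longrightarrow> \<sigma> (f i) = Some (f i, f (i + 2)) \<longrightarrow> (f i, f (i + 2)) \<in> Gs \<sigma>"
      proof (intro allI impI)
        fix i assume i: "i + 2 \<le> d" "\<sigma> (f i) = Some (f i, f (i + 2))"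
        have "f i < n" using fn i by simp
        thus "(f i, f (i + 2)) \<in> Gs \<sigma>" using i unfolding Gs_def by blast
      qed
    qed
    hence "dist (Gs \<sigma>) u w \<le> d - card (S \<sigma>)" using f by (simp add: dist_le)
    moreover have "card (S \<sigma>) \<le> card I" using SI finI by (simp add: card_mono)
    moreover have "card I \<le> d - 1" using cardI d0 by simp
    ultimately show ?thesis by linarith
  qed
  have int_eq: "(\<integral>\<^sup>+G'. ennreal (real (dist G' u w - 1)) \<partial>round_step n G)
      = (\<integral>\<^sup>+\<sigma>. ennreal (real (dist (Gs \<sigma>) u w - 1)) \<partial>P)"
    by (simp add: round_step_def P_def Gs_def)
  have cardS: "ennreal (real (card (S \<sigma>))) = (\<Sum>i\<in>I. indicator {\<sigma>. \<sigma> (f i) = Some (f i, f (i + 2))} \<sigma>)" for \<sigma>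
  proof -
    have "real (card (S \<sigma>)) = (\<Sum>i\<in>I. indicator {\<sigma>. \<sigma> (f i) = Some (f i, f (i + 2))} \<sigma>)"
    proof -
      have "S \<sigma> = {i\<in>I. \<sigma> (f i) = Some (f i, f (i + 2))}" unfolding S_def I_def by auto
      thus ?thesis using finI by (simp add: indicator_def sum.If_cases Int_def)
    qed
    thus ?thesis by (simp add: sum_ennreal[symmetric] ennreal_indicator)
  qed
  have lbS: "(\<integral>\<^sup>+\<sigma>. ennreal (real (card (S \<sigma>))) \<partial>P) \<ge> ennreal (real (d div 2) / real n ^ 2)"
  proof -
    have "(\<integral>\<^sup>+\<sigma>. ennreal (real (card (S \<sigma>))) \<partial>P) = (\<Sum>i\<in>I. emeasure (measure_pmf P) {\<sigma>. \<sigma> (f i) = Some (f i, f (i + 2))})"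
      by (simp add: cardS nn_integral_sum)
    also have "\<dots> = (\<Sum>i\<in>I. ennreal (pmf (node_step G (f i)) (Some (f i, f (i + 2)))))"
      using fn unfolding P_def I_def by (intro sum.cong refl marginal) auto
    also have "\<dots> \<ge> (\<Sum>i\<in>I. ennreal (1 / real n ^ 2))"
    proof (intro sum_mono ennreal_leI)
      fix i assume i: "i \<in> I"
      hence i2: "i + 2 \<le> d" by (auto simp: I_def)
      show "1 / real n ^ 2 \<le> pmf (node_step G (f i)) (Some (f i, f (i + 2)))"
      proof (rule node_step_lb[OF fin sq])
        show "(f i, f (Suc i)) \<in> G" using f(3) i2 by auto
        show "(f (Suc i), f (i + 2)) \<in> G" using f(3) i2 by (auto simp: numeral_2_eq_2)
        show "f i \<noteq> f (i + 2)" by (rule shortest_distinct[OF f(3) least i2])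
      qed
    qed
    finally show ?thesis using cardI by (simp add: ennreal_of_nat_eq_real_of_nat ennreal_mult'[symmetric])
  qed
  have addle: "(\<integral>\<^sup>+\<sigma>. ennreal (real (dist (Gs \<sigma>) u w - 1)) \<partial>P) + (\<integral>\<^sup>+\<sigma>. ennreal (real (card (S \<sigma>))) \<partial>P)
      \<le> ennreal (real (d - 1))"
  proof -
    have "(\<integral>\<^sup>+\<sigma>. ennreal (real (dist (Gs \<sigma>) u w - 1)) \<partial>P) + (\<integral>\<^sup>+\<sigma>. ennreal (real (card (S \<sigma>))) \<partial>P)
      = (\<integral>\<^sup>+\<sigma>. ennreal (real (dist (Gs \<sigma>) u w - 1)) + ennreal (real (card (S \<sigma>))) \<partial>P)"
      by (rule nn_integral_add[symmetric]) auto
    also have "\<dots> \<le> (\<integral>\<^sup>+\<sigma>. ennreal (real (d - 1)) \<partial>P)"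
    proof (rule nn_integral_mono)
      fix \<sigma>
      have "ennreal (real (dist (Gs \<sigma>) u w - 1)) + ennreal (real (card (S \<sigma>)))
          = ennreal (real (dist (Gs \<sigma>) u w - 1 + card (S \<sigma>)))" by (simp add: ennreal_plus[symmetric] del: ennreal_plus)
      also have "\<dots> \<le> ennreal (real (d - 1))" using key[of \<sigma>] by (intro ennreal_leI) simp
      finally show "ennreal (real (dist (Gs \<sigma>) u w - 1)) + ennreal (real (card (S \<sigma>))) \<le> ennreal (real (d - 1))" .
    qed
    also have "\<dots> = ennreal (real (d - 1))" by simp
    finally show ?thesis .
  qed
  define X where "X = (\<integral>\<^sup>+\<sigma>. ennreal (real (dist (Gs \<sigma>) u w - 1)) \<partial>P)"
  define b where "b = real (d div 2) / real n ^ 2"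
  have b0: "b \<ge> 0" by (simp add: b_def)
  have "X + ennreal b \<le> ennreal (real (d - 1))"
    using addle lbS unfolding X_def b_def by (meson add_left_mono order_trans)
  moreover have "X \<noteq> \<top>" using calculation by (metis ennreal_add_eq_top ennreal_neq_top top.extremum_uniqueI)
  then obtain x where x: "X = ennreal x" "x \<ge> 0" by (cases X) auto
  ultimately have "ennreal (x + b) \<le> ennreal (real (d - 1))" using b0 by (simp add: ennreal_plus)
  hence xb: "x + b \<le> real (d - 1)" by (simp add: ennreal_le_iff)
  have n0: "n > 0" using fn[of 0] d0 by simp
  have "real (d - 1) \<le> 2 * real (d div 2)" by linarith
  hence "real (d - 1) / (2 * real n ^ 2) \<le> b" unfolding b_def using n0
    by (simp add: divide_right_mono field_simps)
  hence xle: "x \<le> (1 - 1 / (2 * real n ^ 2)) * real (d - 1)" using xb by (simp add: algebra_simps)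
  have r0: "1 - 1 / (2 * real n ^ 2) \<ge> 0"
  proof -
    have "real n ^ 2 \<ge> 1" using n0 by simp
    hence "1 / (2 * real n ^ 2) \<le> 1" by (simp add: divide_le_eq)
    thus ?thesis by simp
  qed
  have "X \<le> ennreal ((1 - 1 / (2 * real n ^ 2)) * real (d - 1))" using x xle by (simp add: ennreal_leI)
  also have "\<dots> = ennreal (1 - 1 / (2 * real n ^ 2)) * ennreal (real (d - 1))" using r0 by (simp add: ennreal_mult)
  finally show ?thesis using int_eq unfolding X_def d_def by simp
qed

lemma numeric_a:
  fixes n T :: nat
  assumes n: "n \<ge> 2" and T: "real T \<ge> 10 * real n ^ 2 * ln (real n)"
  shows "real n ^ 4 * (1 - 1 / (2 * real n ^ 2)) ^ T \<le> 1 / real n"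
proof -
  define a where "a = 1 / (2 * real n ^ 2)"
  have "real n \<ge> 1" using n by simp
  hence "real n ^ 2 \<ge> 1" by (rule one_le_power)
  hence a0: "a \<ge> 0" "a \<le> 1" by (auto simp: a_def divide_le_eq)
  have "(1 - a) ^ T \<le> exp (- a) ^ T"
    using a0 by (intro power_mono) (auto simp: exp_ge_add_one_self[of "-a", simplified] )
  also have "\<dots> = exp (- a * real T)" by (simp add: exp_of_nat_mult[symmetric] mult.commute)
  also have "\<dots> \<le> exp (- (5 * ln (real n)))"
  proof -
    have "a * real T \<ge> a * (10 * real n ^ 2 * ln (real n))" using T a0 by (intro mult_left_mono) auto
    also have "a * (10 * real n ^ 2 * ln (real n)) = 5 * ln (real n)" using n by (simp add: a_def field_simps)
    finally show ?thesis by simp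
  qed
  also have "\<dots> = 1 / real n ^ 5"
  proof -
    have "exp (5 * ln (real n)) = real n ^ 5" using n
      by (metis exp_ln exp_of_nat_mult of_nat_numeral of_nat_0_less_iff order_less_le_trans pos2 zero_less_numeral)
    thus ?thesis by (simp add: exp_minus field_simps)
  qed
  finally have "(1 - a) ^ T \<le> 1 / real n ^ 5" .
  hence "real n ^ 4 * (1 - a) ^ T \<le> real n ^ 4 * (1 / real n ^ 5)" by (intro mult_left_mono) auto
  also have "\<dots> = 1 / real n" using n by (simp add: field_simps power_eq_if)
  finally show ?thesis by (simp add: a_def)
qed

lemma dist_G0_le:
  assumes dg: "digraph_on n G0" and uw: "(u, w) \<in> G0\<^sup>+"
  shows "dist G0 u w \<le> n ^ 2"
proof -
  have fin: "finite G0" by (rule fin_G0[OF dg])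
  obtain k where k: "k \<in> {0<..card G0}" "(u, w) \<in> G0 ^^ k"
    using uw unfolding trancl_finite_eq_relpow[OF fin] by auto
  have "card G0 \<le> card ({..<n} \<times> {..<n})" using dg unfolding digraph_on_def by (intro card_mono) auto
  hence "card G0 \<le> n ^ 2" by (simp add: card_cartesian_product power2_eq_square)
  thus ?thesis using dist_le[OF k(2)] k(1) by simp
qed

lemma pair_fail:
  assumes dg: "digraph_on n G0" and uw: "u \<noteq> w" "(u, w) \<in> G0\<^sup>+"
  shows "emeasure (measure_pmf (two_hop n G0 T)) {G. (u, w) \<notin> G} \<le> ennreal ((1 - 1 / (2 * real n ^ 2)) ^ T * real n ^ 2)"
proof -
  define \<Phi> where "\<Phi> = (\<lambda>G. ennreal (real (dist G u w - 1)))"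
  have fin: "finite G0" by (rule fin_G0[OF dg])
  have r0: "1 - 1 / (2 * real n ^ 2) \<ge> 0"
  proof (cases "n = 0")
    case False
    hence "real n ^ 2 \<ge> 1" by simp
    hence "1 / (2 * real n ^ 2) \<le> 1" by (simp add: divide_le_eq)
    thus ?thesis by simp
  qed simp
  have it: "(\<integral>\<^sup>+G. \<Phi> G \<partial>two_hop n G0 T) \<le> ennreal (1 - 1 / (2 * real n ^ 2)) ^ T * \<Phi> G0"
    unfolding \<Phi>_def by (rule two_hop_iter[OF fin step_a[OF dg _ _ uw]])
  have "emeasure (measure_pmf (two_hop n G0 T)) {G. (u, w) \<notin> G} = (\<integral>\<^sup>+G. indicator {G. (u, w) \<notin> G} G \<partial>two_hop n G0 T)"
    by simp
  also have "\<dots> \<le> (\<integral>\<^sup>+G. \<Phi> G \<partial>two_hop n G0 T)"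
  proof (rule nn_integral_mono_AE)
    show "AE G in measure_pmf (two_hop n G0 T). indicator {G. (u, w) \<notin> G} G \<le> \<Phi> G"
    proof (unfold AE_measure_pmf_iff, intro ballI)
      fix G assume G: "G \<in> set_pmf (two_hop n G0 T)"
      have inv: "G0 \<subseteq> G" using two_hop_inv[OF fin G] by auto
      have "(u, w) \<in> G\<^sup>+" using uw(2) inv trancl_mono by blast
      hence dG: "(u, w) \<in> G ^^ dist G u w" by (rule dist_in)
      show "indicator {G. (u, w) \<notin> G} G \<le> \<Phi> G"
      proof (cases "(u, w) \<in> G")
        case False
        have "dist G u w \<noteq> 0" using dG uw(1) by (metis relpow_0_E)
        moreover have "dist G u w \<noteq> 1" using dG False by (metis relpow_1)
        ultimately have "dist G u w - 1 \<ge> 1" by linarith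
        thus ?thesis using False by (simp add: \<Phi>_def indicator_def)
      qed (simp add: indicator_def)
    qed
  qed
  also have "\<dots> \<le> ennreal (1 - 1 / (2 * real n ^ 2)) ^ T * \<Phi> G0" by (rule it)
  also have "\<dots> \<le> ennreal ((1 - 1 / (2 * real n ^ 2)) ^ T) * ennreal (real n ^ 2)"
  proof (intro mult_mono)
    show "ennreal (1 - 1 / (2 * real n ^ 2)) ^ T \<le> ennreal ((1 - 1 / (2 * real n ^ 2)) ^ T)"
      using r0 by (simp add: ennreal_power)
    show "\<Phi> G0 \<le> ennreal (real n ^ 2)" unfolding \<Phi>_def using dist_G0_le[OF dg uw(2)]
      by (intro ennreal_leI) (simp flip: of_nat_power)
  qed auto
  also have "\<dots> = ennreal ((1 - 1 / (2 * real n ^ 2)) ^ T * real n ^ 2)" using r0 by (simp add: ennreal_mult)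
  finally show ?thesis .
qed

lemma part_a:
  assumes n: "n \<ge> 2" and dg: "digraph_on n G0"
  shows "term_prob n G0 (nat \<lceil>10 * real n ^ 2 * ln (real n)\<rceil>) \<ge> 1 - 1 / real n"
proof -
  define T where "T = nat \<lceil>10 * real n ^ 2 * ln (real n)\<rceil>"
  have T: "real T \<ge> 10 * real n ^ 2 * ln (real n)" unfolding T_def by linarith
  define Pairs where "Pairs = {(u, w). u \<noteq> w \<and> (u, w) \<in> G0\<^sup>+}"
  have Psub: "Pairs \<subseteq> {..<n} \<times> {..<n}" using sq_trancl[OF dg] unfolding Pairs_def by auto
  have finP: "finite Pairs" using Psub by (meson finite_SigmaI finite_lessThan finite_subset)
  have cardP: "card Pairs \<le> n ^ 2"
    using card_mono[OF _ Psub] by (simp add: card_cartesian_product power2_eq_square)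
  define M where "M = measure_pmf (two_hop n G0 T)"
  define B where "B = (1 - 1 / (2 * real n ^ 2)) ^ T * real n ^ 2"
  have B0: "B \<ge> 0"
  proof -
    have "real n ^ 2 \<ge> 1" using n by simp
    hence "1 / (2 * real n ^ 2) \<le> 1" by (simp add: divide_le_eq)
    thus ?thesis unfolding B_def by simp
  qed
  have each: "measure M {G. p \<notin> G} \<le> B" if p: "p \<in> Pairs" for p
  proof -
    obtain u w where p': "p = (u, w)" "u \<noteq> w" "(u, w) \<in> G0\<^sup>+" using p unfolding Pairs_def by auto
    have "emeasure M {G. p \<notin> G} \<le> ennreal B"
      unfolding M_def B_def p'(1) by (rule pair_fail[OF dg p'(2,3)])
    thus ?thesis using B0 by (simp add: measure_pmf.emeasure_eq_measure M_def ennreal_le_iff)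
  qed
  have un: "{G. \<not> terminated G0 G} = (\<Union>p\<in>Pairs. {G. p \<notin> G})"
    unfolding terminated_def Pairs_def by auto
  have "measure M {G. \<not> terminated G0 G} \<le> (\<Sum>p\<in>Pairs. measure M {G. p \<notin> G})"
    unfolding un M_def by (rule measure_pmf.finite_measure_subadditive_finite[OF finP]) auto
  also have "\<dots> \<le> (\<Sum>p\<in>Pairs. B)" by (rule sum_mono) (rule each)
  also have "\<dots> = real (card Pairs) * B" by simp
  also have "\<dots> \<le> real n ^ 2 * B" using cardP B0 by (intro mult_right_mono) (auto simp flip: of_nat_power)
  also have "\<dots> = real n ^ 4 * (1 - 1 / (2 * real n ^ 2)) ^ T" unfolding B_def by (simp add: algebra_simps power_eq_if)
  also have "\<dots> \<le> 1 / real n" by (rule numeric_a[OF n T])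
  finally have bad: "measure M {G. \<not> terminated G0 G} \<le> 1 / real n" .
  have "term_prob n G0 T = measure M (space M - {G. \<not> terminated G0 G})"
    unfolding term_prob_def M_def by (rule arg_cong[where f="measure _"]) auto
  also have "\<dots> = 1 - measure M {G. \<not> terminated G0 G}"
    unfolding M_def by (rule measure_pmf.prob_compl) auto
  finally show ?thesis using bad unfolding T_def by linarith
qed

definition Gb :: "nat \<Rightarrow> (nat \<times> nat) set" where
  "Gb m = {(0, Suc i) | i. i < m} \<union> {(Suc i, Suc (m + i)) | i. i < m}
      \<union> {(Suc i, Suc (2 * m + j)) | i j. i < m \<and> j < m}"

definition Cl :: "nat \<Rightarrow> (nat \<times> nat) set" where
  "Cl m = Gb m \<union> {(0, Suc (m + i)) | i. i < m} \<union> {(0, Suc (2 * m + j)) | j. j < m}"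

lemma Gb_trancl: "(Gb m)\<^sup>+ \<subseteq> Cl m"
proof
  fix p assume "p \<in> (Gb m)\<^sup>+"
  then obtain a b where p: "p = (a, b)" "(a, b) \<in> (Gb m)\<^sup>+" by (cases p) auto
  from p(2) have "(a, b) \<in> Cl m"
  proof (induction rule: trancl_induct)
    case (base y) thus ?case by (simp add: Cl_def)
  next
    case (step y z)
    thus ?case by (auto simp: Cl_def Gb_def)
  qed
  thus "p \<in> Cl m" using p by simp
qed

lemma Gb_digraph: "digraph_on (3 * m + 1) (Gb m)"
  unfolding digraph_on_def Gb_def by auto

lemma Gb_wc: assumes m: "m \<ge> 1" shows "weakly_connected_on (3 * m + 1) (Gb m)"
proof -
  define E where "E = Gb m \<union> (Gb m)\<inverse>"
  have from0: "(0, k) \<in> E\<^sup>*" if k: "k < 3 * m + 1" for k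
  proof -
    consider "k = 0" | i where "k = Suc i" "i < m" | i where "k = Suc (m + i)" "i < m"
      | j where "k = Suc (2 * m + j)" "j < m"
    proof -
      assume c1: "k = 0 \<Longrightarrow> thesis" and c2: "\<And>i. k = Suc i \<Longrightarrow> i < m \<Longrightarrow> thesis"
        and c3: "\<And>i. k = Suc (m + i) \<Longrightarrow> i < m \<Longrightarrow> thesis"
        and c4: "\<And>j. k = Suc (2 * m + j) \<Longrightarrow> j < m \<Longrightarrow> thesis"
      show thesis
      proof (cases k)
        case 0 thus ?thesis using c1 by simp
      next
        case (Suc l)
        show ?thesis
        proof (cases "l < m")
          case True thus ?thesis using c2 Suc by simp
        next
          case F1: False
          show ?thesis
          proof (cases "l < 2 * m")
            case True thus ?thesis using c3[of "l - m"] Suc F1 by simp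
          next
            case False thus ?thesis using c4[of "l - 2 * m"] Suc k by simp
          qed
        qed
      qed
    qed
    thus ?thesis
    proof cases
      case 1 thus ?thesis by simp
    next
      case (2 i) thus ?thesis unfolding E_def Gb_def by (intro r_into_rtrancl) auto
    next
      case (3 i)
      have "(0, Suc i) \<in> E" "(Suc i, k) \<in> E" unfolding E_def Gb_def using 3 by auto
      thus ?thesis by (meson converse_rtrancl_into_rtrancl r_into_rtrancl)
    next
      case (4 j)
      have "(0, Suc 0) \<in> E" "(Suc 0, k) \<in> E" unfolding E_def Gb_def using 4 m by auto
      thus ?thesis by (meson converse_rtrancl_into_rtrancl r_into_rtrancl)
    qed
  qed
  have symE: "sym E" unfolding E_def sym_def by auto
  show ?thesis unfolding weakly_connected_on_def
  proof (intro allI impI)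
    fix u v assume u: "u < 3 * m + 1" and v: "v < 3 * m + 1"
    have "(u, 0) \<in> E\<^sup>*" using from0[OF u] symE
      by (metis converse_rtrancl_into_rtrancl rtrancl_converseD sym_conv_converse_eq)
    thus "(u, v) \<in> (Gb m \<union> (Gb m)\<inverse>)\<^sup>*" using from0[OF v] unfolding E_def by simp
  qed
qed

lemma marginal_set:
  fixes x n :: nat
  assumes "x < n"
  shows "emeasure (measure_pmf (Pi_pmf {..<n} dflt F)) {\<sigma>. \<sigma> x \<in> Y} = emeasure (measure_pmf (F x)) Y"
proof -
  have v: "{\<sigma>. \<sigma> x \<in> Y} = (\<lambda>\<sigma>. \<sigma> x) -` Y" by auto
  have m: "map_pmf (\<lambda>\<sigma>. \<sigma> x) (Pi_pmf {..<n} dflt F) = F x"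
  proof -
    have "map_pmf (\<lambda>\<sigma>. \<sigma> x) (Pi_pmf {..<n} dflt F) = (if x \<in> {..<n} then F x else return_pmf dflt)"
      by (rule Pi_pmf_component) simp
    thus ?thesis using assms by simp
  qed
  have "emeasure (measure_pmf (F x)) Y = emeasure (measure_pmf (Pi_pmf {..<n} dflt F)) ((\<lambda>\<sigma>. \<sigma> x) -` Y)"
    by (subst m[symmetric]) (rule emeasure_map_pmf)
  thus ?thesis unfolding v by simp
qed

lemma Cl_sq: "Cl m \<subseteq> {..<3*m+1} \<times> {..<3*m+1}"
  by (auto simp: Cl_def Gb_def)

lemma pmf_w_ub:
  assumes m: "m \<ge> 1" and G: "Gb m \<subseteq> G" "G \<subseteq> Cl m" and i: "i < m"
  shows "pmf (node_step G 0) (Some (0, Suc (m + i))) \<le> 1 / (real m * (real m + 1))"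
proof -
  have fin: "finite G" using G(2) Cl_sq by (meson finite_SigmaI finite_lessThan finite_subset)
  define N0 where "N0 = out_nbrs G 0"
  have finN: "finite (out_nbrs G v)" for v using finite_out[OF fin] .
  have vi: "Suc i \<in> N0" using G(1) i unfolding N0_def out_nbrs_def Gb_def by auto
  have "Suc ` {..<m} \<subseteq> N0" using G(1) unfolding N0_def out_nbrs_def Gb_def by auto
  hence cN0: "card N0 \<ge> m" using card_mono[OF finN[of 0]] N0_def
    by (metis card_image card_lessThan inj_Suc inj_on_subset subset_UNIV)
  have only: "v = Suc i" if "v \<in> N0" "Suc (m + i) \<in> out_nbrs G v" for v
  proof -
    have "(v, Suc (m + i)) \<in> Cl m" "(0, v) \<in> Cl m" using that G(2) unfolding N0_def out_nbrs_def by auto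
    thus ?thesis using i unfolding Cl_def Gb_def by auto
  qed
  have "insert (Suc (m + i)) ((\<lambda>j. Suc (2 * m + j)) ` {..<m}) \<subseteq> out_nbrs G (Suc i)"
    using G(1) i unfolding out_nbrs_def Gb_def by auto
  hence "card (insert (Suc (m + i)) ((\<lambda>j. Suc (2 * m + j)) ` {..<m})) \<le> card (out_nbrs G (Suc i))"
    using finN by (intro card_mono) auto
  moreover have "card (insert (Suc (m + i)) ((\<lambda>j. Suc (2 * m + j)) ` {..<m})) = m + 1"
  proof -
    have "Suc (m + i) \<notin> (\<lambda>j. Suc (2 * m + j)) ` {..<m}" using i by auto
    moreover have "card ((\<lambda>j. Suc (2 * m + j)) ` {..<m}) = m" by (simp add: card_image inj_on_def)
    ultimately show ?thesis by simp
  qed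
  ultimately have cvi: "card (out_nbrs G (Suc i)) \<ge> m + 1" by simp
  have "(\<Sum>v\<in>N0. if Suc (m + i) \<in> out_nbrs G v then 1 / real (card (out_nbrs G v)) else 0)
      \<le> (\<Sum>v\<in>N0. if v = Suc i then 1 / (real m + 1) else 0)"
  proof (rule sum_mono)
    fix v assume v: "v \<in> N0"
    show "(if Suc (m + i) \<in> out_nbrs G v then 1 / real (card (out_nbrs G v)) else 0)
      \<le> (if v = Suc i then 1 / (real m + 1) else 0)"
    proof (cases "Suc (m + i) \<in> out_nbrs G v")
      case True
      hence "v = Suc i" using only v by blast
      thus ?thesis using True cvi by (simp add: frac_le)
    qed simp
  qed
  also have "\<dots> = 1 / (real m + 1)" using vi finN[of 0] unfolding N0_def by simp
  finally have S: "(\<Sum>v\<in>N0. if Suc (m + i) \<in> out_nbrs G v then 1 / real (card (out_nbrs G v)) else 0) \<le> 1 / (real m + 1)" .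
  have ne: "N0 \<noteq> {}" using vi by auto
  have "pmf (node_step G 0) (Some (0, Suc (m + i))) =
      (\<Sum>v\<in>N0. if Suc (m + i) \<in> out_nbrs G v then 1 / real (card (out_nbrs G v)) else 0) / real (card N0)"
    using node_step_pmf[OF fin, of 0 "Suc (m + i)"] ne unfolding N0_def by simp
  also have "\<dots> \<le> (1 / (real m + 1)) / real (card N0)" using S by (intro divide_right_mono) auto
  also have "\<dots> \<le> (1 / (real m + 1)) / real m" using cN0 m by (intro divide_left_mono) auto
  also have "\<dots> = 1 / (real m * (real m + 1))" by simp
  finally show ?thesis .
qed

definition Kc :: "nat \<Rightarrow> (nat \<times> nat) set \<Rightarrow> nat" where
  "Kc m G = card {i. i < m \<and> (0, Suc (m + i)) \<notin> G}"

definition Fb :: "nat \<Rightarrow> (nat \<times> nat) set \<Rightarrow> ennreal" where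
  "Fb m G = ennreal (1 / (real (Kc m G) + 1))"

lemma step_b:
  assumes m: "m \<ge> 1" and G: "Gb m \<subseteq> G" "G \<subseteq> (Gb m)\<^sup>+"
  shows "(\<integral>\<^sup>+G'. Fb m G' \<partial>round_step (3 * m + 1) G) \<le> ennreal (1 + 1 / (real m * (real m + 1))) * Fb m G"
proof -
  define n where "n = 3 * m + 1"
  have GC: "G \<subseteq> Cl m" using G(2) Gb_trancl by blast
  have fin: "finite G" using GC Cl_sq by (meson finite_SigmaI finite_lessThan finite_subset)
  define P where "P = Pi_pmf {..<n} None (node_step G)"
  define Gs where "Gs = (\<lambda>\<sigma>. G \<union> {a. \<exists>x<n. \<sigma> x = Some a})"
  define Miss where "Miss = {i. i < m \<and> (0, Suc (m + i)) \<notin> G}"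
  define K where "K = card Miss"
  define q where "q = 1 / (real m * (real m + 1))"
  define Y :: "(nat \<times> nat) option set" where "Y = (\<lambda>i. Some (0, Suc (m + i))) ` Miss"
  define Ev :: "(nat \<Rightarrow> (nat \<times> nat) option) set" where "Ev = {\<sigma>. \<sigma> 0 \<in> Y}"
  have q0: "q \<ge> 0" unfolding q_def by simp
  have finM: "finite Miss" unfolding Miss_def by simp
  have KG: "Kc m G = K" unfolding Kc_def K_def Miss_def ..
  have int_eq: "(\<integral>\<^sup>+G'. Fb m G' \<partial>round_step n G) = (\<integral>\<^sup>+\<sigma>. Fb m (Gs \<sigma>) \<partial>P)"
    by (simp add: round_step_def P_def Gs_def)
  have det: "Miss - {i. \<sigma> 0 = Some (0, Suc (m + i))} \<subseteq> {i. i < m \<and> (0, Suc (m + i)) \<notin> Gs \<sigma>}"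
    if \<sigma>: "\<sigma> \<in> set_pmf P" for \<sigma>
  proof
    fix i assume i: "i \<in> Miss - {i. \<sigma> 0 = Some (0, Suc (m + i))}"
    have supp: "\<forall>x<n. \<sigma> x \<in> set_pmf (node_step G x)"
      using \<sigma> unfolding P_def by (auto simp: set_Pi_pmf PiE_dflt_def)
    have "(0, Suc (m + i)) \<notin> Gs \<sigma>"
    proof
      assume "(0, Suc (m + i)) \<in> Gs \<sigma>"
      then obtain x where x: "x < n" "\<sigma> x = Some (0, Suc (m + i))" using i unfolding Gs_def Miss_def by auto
      have "x = 0" using node_step_set[OF fin, of "(0, Suc (m + i))" x] supp x by auto
      thus False using x i by auto
    qed
    thus "i \<in> {i. i < m \<and> (0, Suc (m + i)) \<notin> Gs \<sigma>}" using i unfolding Miss_def by auto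
  qed
  have Kle: "Kc m (Gs \<sigma>) \<ge> K - (if \<sigma> \<in> Ev then 1 else 0)" if \<sigma>: "\<sigma> \<in> set_pmf P" for \<sigma>
  proof -
    have fin': "finite {i. i < m \<and> (0, Suc (m + i)) \<notin> Gs \<sigma>}" by simp
    have A: "card (Miss - {i. \<sigma> 0 = Some (0, Suc (m + i))}) \<le> Kc m (Gs \<sigma>)"
      unfolding Kc_def using det[OF \<sigma>] fin' by (rule card_mono[rotated])
    show ?thesis
    proof (cases "\<sigma> \<in> Ev")
      case False
      hence "Miss - {i. \<sigma> 0 = Some (0, Suc (m + i))} = Miss" unfolding Ev_def Y_def by auto
      thus ?thesis using A False K_def by simp
    next
      case True
      then obtain i0 where "\<sigma> 0 = Some (0, Suc (m + i0))" unfolding Ev_def Y_def by auto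
      hence "{i. \<sigma> 0 = Some (0, Suc (m + i))} = {i0}" by auto
      hence "card (Miss - {i. \<sigma> 0 = Some (0, Suc (m + i))}) \<ge> K - 1"
        unfolding K_def using finM by (simp add: card_Diff_singleton_if)
      thus ?thesis using A True by simp
    qed
  qed
  have PEv: "emeasure (measure_pmf P) Ev \<le> ennreal (real K * q)"
  proof -
    have "emeasure (measure_pmf P) Ev = emeasure (measure_pmf (node_step G 0)) Y"
      unfolding P_def Ev_def by (rule marginal_set) (simp add: n_def)
    also have "\<dots> = ennreal (\<Sum>y\<in>Y. pmf (node_step G 0) y)"
      using finM unfolding Y_def by (simp add: emeasure_measure_pmf_finite sum_ennreal)
    also have "(\<Sum>y\<in>Y. pmf (node_step G 0) y) = (\<Sum>i\<in>Miss. pmf (node_step G 0) (Some (0, Suc (m + i))))"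
      unfolding Y_def by (subst sum.reindex) (auto simp: inj_on_def)
    also have "\<dots> \<le> (\<Sum>i\<in>Miss. q)"
      by (rule sum_mono) (use pmf_w_ub[OF m G(1) GC] in \<open>auto simp: Miss_def q_def\<close>)
    also have "\<dots> = real K * q" by (simp add: K_def)
    finally show ?thesis by (simp add: ennreal_leI)
  qed
  show ?thesis
  proof (cases "K = 0")
    case True
    have "(\<integral>\<^sup>+\<sigma>. Fb m (Gs \<sigma>) \<partial>P) \<le> (\<integral>\<^sup>+\<sigma>. 1 \<partial>P)"
      by (rule nn_integral_mono) (auto simp: Fb_def divide_le_eq)
    also have "\<dots> = 1" by simp
    also have "\<dots> \<le> ennreal (1 + q)" using q0 by simp
    also have "\<dots> = ennreal (1 + q) * Fb m G" using True KG by (simp add: Fb_def)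
    finally show ?thesis using int_eq unfolding n_def q_def by simp
  next
    case False
    define c where "c = 1 / real K - 1 / (real K + 1)"
    have c0: "c \<ge> 0" unfolding c_def using False by (simp add: frac_le)
    have "(\<integral>\<^sup>+\<sigma>. Fb m (Gs \<sigma>) \<partial>P) \<le> (\<integral>\<^sup>+\<sigma>. ennreal (1 / (real K + 1)) + ennreal c * indicator Ev \<sigma> \<partial>P)"
    proof (rule nn_integral_mono_AE, unfold AE_measure_pmf_iff, intro ballI)
      fix \<sigma> assume \<sigma>: "\<sigma> \<in> set_pmf P"
      note kk = Kle[OF \<sigma>]
      show "Fb m (Gs \<sigma>) \<le> ennreal (1 / (real K + 1)) + ennreal c * indicator Ev \<sigma>"
      proof (cases "\<sigma> \<in> Ev")
        case False
        hence "real K \<le> real (Kc m (Gs \<sigma>))" using kk by simp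
        hence "1 / (real (Kc m (Gs \<sigma>)) + 1) \<le> 1 / (real K + 1)" by (intro divide_left_mono) auto
        thus ?thesis using False by (simp add: Fb_def ennreal_leI)
      next
        case True
        hence "real K \<le> real (Kc m (Gs \<sigma>)) + 1" using kk by simp
        hence "1 / (real (Kc m (Gs \<sigma>)) + 1) \<le> 1 / real K" using False by (intro divide_left_mono) auto
        also have "\<dots> = 1 / (real K + 1) + c" unfolding c_def by simp
        finally have "ennreal (1 / (real (Kc m (Gs \<sigma>)) + 1)) \<le> ennreal (1 / (real K + 1) + c)" by (rule ennreal_leI)
        thus ?thesis using True c0 by (simp add: Fb_def ennreal_plus)
      qed
    qed
    also have "\<dots> = ennreal (1 / (real K + 1)) + ennreal c * emeasure (measure_pmf P) Ev"
      by (subst nn_integral_add) (auto simp: nn_integral_cmult_indicator)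
    also have "\<dots> \<le> ennreal (1 / (real K + 1)) + ennreal c * ennreal (real K * q)"
      by (intro add_left_mono mult_left_mono PEv) auto
    also have "\<dots> = ennreal (1 / (real K + 1) + c * (real K * q))"
      using c0 q0 by (simp add: ennreal_mult ennreal_plus)
    also have "1 / (real K + 1) + c * (real K * q) = (1 + q) * (1 / (real K + 1))"
    proof -
      have K0: "real K > 0" using False by simp
      have K1: "real K + real K * real K \<noteq> 0" using add_pos_pos[OF K0 mult_pos_pos[OF K0 K0]] by simp
      have cK: "c * real K = 1 / (real K + 1)" unfolding c_def using K0 K1 by (simp add: field_simps)
      have "c * (real K * q) = q * (1 / (real K + 1))" by (metis cK mult.assoc mult.commute)
      thus ?thesis by (simp add: add_divide_distrib)
    qed
    also have "ennreal \<dots> = ennreal (1 + q) * Fb m G" unfolding Fb_def KG by (rule ennreal_mult) (use q0 in auto)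
    finally show ?thesis using int_eq unfolding n_def q_def by simp
  qed
qed

lemma part_b_bound:
  assumes m: "m \<ge> 1"
  shows "term_prob (3 * m + 1) (Gb m) T \<le> (1 + 1 / (real m * (real m + 1))) ^ T / (real m + 1)"
proof -
  define q where "q = 1 / (real m * (real m + 1))"
  have q0: "q \<ge> 0" unfolding q_def by simp
  have fin: "finite (Gb m)" by (rule fin_G0[OF Gb_digraph])
  define M where "M = measure_pmf (two_hop (3 * m + 1) (Gb m) T)"
  have it: "(\<integral>\<^sup>+G. Fb m G \<partial>M) \<le> ennreal (1 + q) ^ T * Fb m (Gb m)"
    unfolding M_def q_def by (rule two_hop_iter[OF fin step_b[OF m]])
  have K0: "Kc m (Gb m) = m"
  proof -
    have "{i. i < m \<and> (0, Suc (m + i)) \<notin> Gb m} = {..<m}" by (auto simp: Gb_def)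
    thus ?thesis unfolding Kc_def by simp
  qed
  have "emeasure M {G. terminated (Gb m) G} \<le> (\<integral>\<^sup>+G. Fb m G \<partial>M)"
  proof -
    have "emeasure M {G. terminated (Gb m) G} = (\<integral>\<^sup>+G. indicator {G. terminated (Gb m) G} G \<partial>M)"
      unfolding M_def by simp
    also have "\<dots> \<le> (\<integral>\<^sup>+G. Fb m G \<partial>M)"
    proof (rule nn_integral_mono)
      fix G
      show "indicator {G. terminated (Gb m) G} G \<le> Fb m G"
      proof (cases "terminated (Gb m) G")
        case True
        have "(0, Suc (m + i)) \<in> G" if "i < m" for i
        proof -
          have "(0, Suc i) \<in> Gb m" "(Suc i, Suc (m + i)) \<in> Gb m" using that by (auto simp: Gb_def)
          hence "(0, Suc (m + i)) \<in> (Gb m)\<^sup>+" by (meson trancl.intros)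
          thus ?thesis using True unfolding terminated_def by blast
        qed
        hence "{i. i < m \<and> (0, Suc (m + i)) \<notin> G} = {}" by auto
        hence "Kc m G = 0" unfolding Kc_def by simp
        thus ?thesis using True by (simp add: Fb_def)
      qed simp
    qed
    finally show ?thesis .
  qed
  also have "\<dots> \<le> ennreal (1 + q) ^ T * Fb m (Gb m)" by (rule it)
  also have "\<dots> = ennreal ((1 + q) ^ T) * ennreal (1 / (real m + 1))"
  proof -
    have e1: "ennreal (1 + q) ^ T = ennreal ((1 + q) ^ T)" by (intro ennreal_power) (use q0 in simp)
    show ?thesis unfolding e1 Fb_def K0 ..
  qed
  also have "\<dots> = ennreal ((1 + q) ^ T * (1 / (real m + 1)))" by (rule ennreal_mult[symmetric]) (use q0 in auto)
  also have "(1 + q) ^ T * (1 / (real m + 1)) = (1 + q) ^ T / (real m + 1)" by simp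
  finally have "emeasure M {G. terminated (Gb m) G} \<le> ennreal ((1 + q) ^ T / (real m + 1))" .
  hence "measure M {G. terminated (Gb m) G} \<le> (1 + q) ^ T / (real m + 1)"
    using q0 by (simp add: M_def measure_pmf.emeasure_eq_measure ennreal_le_iff)
  thus ?thesis unfolding term_prob_def M_def q_def .
qed

lemma numeric_b:
  assumes m: "m \<ge> 1"
  shows "(1 + 1 / (real m * (real m + 1))) ^ (nat \<lfloor>1 / 32 * real (3 * m + 1) ^ 2 * ln (real (3 * m + 1))\<rfloor>) / (real m + 1)
     \<le> 3 / sqrt (real (3 * m + 1))"
proof -
  define n where "n = real (3 * m + 1)"
  define q where "q = 1 / (real m * (real m + 1))"
  define T where "T = nat \<lfloor>1 / 32 * n ^ 2 * ln n\<rfloor>"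
  have n1: "n \<ge> 1" unfolding n_def by simp
  have q0: "q \<ge> 0" unfolding q_def by simp
  have lnn: "ln n \<ge> 0" using n1 by simp
  have Tle: "real T \<le> 1 / 32 * n ^ 2 * ln n"
  proof -
    define x where "x = 1 / 32 * n ^ 2 * ln n"
    have x0: "x \<ge> 0" unfolding x_def using lnn by simp
    have "real_of_int \<lfloor>x\<rfloor> \<le> x" by (rule of_int_floor_le)
    moreover have "\<lfloor>x\<rfloor> \<ge> 0" using x0 by simp
    ultimately show ?thesis unfolding T_def x_def[symmetric] by simp
  qed
  have "(1 + q) ^ T \<le> exp q ^ T" using q0 by (intro power_mono) (auto simp: add.commute exp_ge_add_one_self)
  also have "\<dots> = exp (q * real T)" by (simp add: exp_of_nat_mult[symmetric] mult.commute)
  also have "\<dots> \<le> exp (ln n / 2)"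
  proof -
    have mpos: "real m * (real m + 1) > 0" using m by simp
    have rm: "real m \<ge> 1" using m by simp
    have "real m * (real m * 7) \<ge> 0" by simp
    hence "1 \<le> real m * 10 + real m * (real m * 7)" using rm by linarith
    hence "n ^ 2 \<le> 16 * (real m * (real m + 1))" unfolding n_def
      by (simp add: power2_eq_square algebra_simps)
    hence qn: "q * n ^ 2 \<le> 16" unfolding q_def using mpos by (simp add: divide_le_eq mult.commute)
    have "q * real T \<le> q * (1 / 32 * n ^ 2 * ln n)" using Tle q0 by (rule mult_left_mono)
    also have "\<dots> = (q * n ^ 2) * ln n / 32" by simp
    also have "\<dots> \<le> 16 * ln n / 32" using qn lnn by (intro divide_right_mono mult_right_mono) auto
    finally show ?thesis by simp
  qed
  also have "\<dots> = exp (ln (sqrt n))" using n1 by (simp add: ln_sqrt)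
  also have "\<dots> = sqrt n" using n1 by simp
  finally have A: "(1 + q) ^ T \<le> sqrt n" .
  have "(1 + q) ^ T / (real m + 1) \<le> sqrt n / (real m + 1)" using A by (intro divide_right_mono) auto
  also have "\<dots> \<le> 3 / sqrt n"
  proof -
    have sq: "sqrt n * sqrt n = n" using n1 by simp
    have "n \<le> 3 * (real m + 1)" unfolding n_def by simp
    hence "sqrt n * sqrt n \<le> 3 * (real m + 1)" using sq by simp
    moreover have "sqrt n > 0" using n1 by simp
    ultimately show ?thesis by (simp add: field_simps)
  qed
  finally show ?thesis unfolding n_def q_def T_def by simp
qed

lemma eps_bound:
  assumes e: "\<epsilon> > 0" and n: "real n \<ge> 9 / \<epsilon>^2 + 1"
  shows "3 / sqrt (real n) < \<epsilon>"
proof -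
  have "9 / \<epsilon>^2 < real n" using n by linarith
  hence "sqrt (9 / \<epsilon>^2) < sqrt (real n)" by (rule real_sqrt_less_mono)
  moreover have "sqrt (9 / \<epsilon>^2) = 3 / \<epsilon>" using e by (simp add: real_sqrt_divide)
  ultimately have s: "3 / \<epsilon> < sqrt (real n)" by simp
  have sp: "sqrt (real n) > 0" using s e by (smt (verit) divide_pos_pos)
  have "3 < \<epsilon> * sqrt (real n)" using s e by (simp add: divide_less_eq mult.commute)
  thus ?thesis using sp by (simp add: divide_less_eq mult.commute)
qed

theorem theorem14:
  shows "(\<exists>C C' :: real. C > 0 \<and> C' > 0 \<and>
            (\<forall>n G0. n \<ge> 2 \<longrightarrow> digraph_on n G0 \<longrightarrow>
               term_prob n G0 (nat \<lceil>C * real n ^ 2 * ln (real n)\<rceil>) \<ge> 1 - C' / real n))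
       \<and> (\<exists>c :: real. c > 0 \<and>
            (\<exists>N :: nat set. \<exists>Gs :: nat \<Rightarrow> (nat \<times> nat) set. infinite N \<and>
               (\<forall>n\<in>N. digraph_on n (Gs n) \<and> weakly_connected_on n (Gs n)) \<and>
               (\<forall>\<epsilon>>0. \<exists>N0. \<forall>n\<in>N. n \<ge> N0 \<longrightarrow>
                  term_prob n (Gs n) (nat \<lfloor>c * real n ^ 2 * ln (real n)\<rfloor>) < \<epsilon>)))"
proof (intro conjI)
  show "\<exists>C C' :: real. C > 0 \<and> C' > 0 \<and>
            (\<forall>n G0. n \<ge> 2 \<longrightarrow> digraph_on n G0 \<longrightarrow>
               term_prob n G0 (nat \<lceil>C * real n ^ 2 * ln (real n)\<rceil>) \<ge> 1 - C' / real n)"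
    by (rule exI[of _ 10], rule exI[of _ 1]) (auto intro: part_a)
next
  define N :: "nat set" where "N = {n. \<exists>m\<ge>1. n = 3 * m + 1}"
  define Gs where "Gs = (\<lambda>n. Gb ((n - 1) div 3))"
  have Nm: "\<exists>m\<ge>1. n = 3 * m + 1 \<and> (n - 1) div 3 = m" if "n \<in> N" for n :: nat
    using that unfolding N_def by auto
  have inf: "infinite N"
    unfolding infinite_nat_iff_unbounded_le
  proof
    fix k show "\<exists>n\<ge>k. n \<in> N" by (rule exI[of _ "3 * (k + 1) + 1"]) (auto simp: N_def)
  qed
  have gr: "\<forall>n\<in>N. digraph_on n (Gs n) \<and> weakly_connected_on n (Gs n)"
  proof
    fix n assume "n \<in> N"
    then obtain m where m: "m \<ge> 1" "n = 3 * m + 1" "(n - 1) div 3 = m" using Nm by blast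
    show "digraph_on n (Gs n) \<and> weakly_connected_on n (Gs n)"
      unfolding Gs_def m(3) using Gb_digraph[of m] Gb_wc[OF m(1)] m(2) by simp
  qed
  have lim: "\<forall>\<epsilon>>0. \<exists>N0. \<forall>n\<in>N. n \<ge> N0 \<longrightarrow>
                  term_prob n (Gs n) (nat \<lfloor>1 / 32 * real n ^ 2 * ln (real n)\<rfloor>) < \<epsilon>"
  proof (intro allI impI)
    fix \<epsilon> :: real assume e: "\<epsilon> > 0"
    show "\<exists>N0. \<forall>n\<in>N. n \<ge> N0 \<longrightarrow> term_prob n (Gs n) (nat \<lfloor>1 / 32 * real n ^ 2 * ln (real n)\<rfloor>) < \<epsilon>"
    proof (intro exI[of _ "nat \<lceil>9 / \<epsilon>^2\<rceil> + 1"] ballI impI)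
      fix n assume nN: "n \<in> N" and nb: "nat \<lceil>9 / \<epsilon>^2\<rceil> + 1 \<le> n"
      then obtain m where m: "m \<ge> 1" "n = 3 * m + 1" "(n - 1) div 3 = m" using Nm by blast
      have "real n \<ge> 9 / \<epsilon>^2 + 1" using nb by linarith
      hence "3 / sqrt (real n) < \<epsilon>" by (rule eps_bound[OF e])
      moreover have "term_prob n (Gs n) (nat \<lfloor>1 / 32 * real n ^ 2 * ln (real n)\<rfloor>) \<le> 3 / sqrt (real n)"
        unfolding Gs_def m(3) unfolding m(2)
        using part_b_bound[OF m(1)] numeric_b[OF m(1)] by (meson order_trans)
      ultimately show "term_prob n (Gs n) (nat \<lfloor>1 / 32 * real n ^ 2 * ln (real n)\<rfloor>) < \<epsilon>" by linarith
    qed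
  qed
  show "\<exists>c :: real. c > 0 \<and>
            (\<exists>N :: nat set. \<exists>Gs :: nat \<Rightarrow> (nat \<times> nat) set. infinite N \<and>
               (\<forall>n\<in>N. digraph_on n (Gs n) \<and> weakly_connected_on n (Gs n)) \<and>
               (\<forall>\<epsilon>>0. \<exists>N0. \<forall>n\<in>N. n \<ge> N0 \<longrightarrow>
                  term_prob n (Gs n) (nat \<lfloor>c * real n ^ 2 * ln (real n)\<rfloor>) < \<epsilon>))"
  proof (rule exI[of _ "1/32"], intro conjI)
    show "(0::real) < 1/32" by simp
    show "\<exists>N :: nat set. \<exists>Gs :: nat \<Rightarrow> (nat \<times> nat) set. infinite N \<and>
               (\<forall>n\<in>N. digraph_on n (Gs n) \<and> weakly_connected_on n (Gs n)) \<and>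
               (\<forall>\<epsilon>>0. \<exists>N0. \<forall>n\<in>N. n \<ge> N0 \<longrightarrow>
                  term_prob n (Gs n) (nat \<lfloor>1/32 * real n ^ 2 * ln (real n)\<rfloor>) < \<epsilon>)"
      by (intro exI[of _ N] exI[of _ Gs] conjI inf gr lim)
  qed
qed

end
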